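(* There exists a locally finite quasi-transitive tree that has no periodic proper edge-coloring.
   Context: Locally finite: all degrees finite; quasi-transitive: finitely many automorphism orbits on vertices. A proper edge-coloring assigns distinct colors to edges sharing a vertex; it is periodic if the subgroup of automorphisms mapping every edge to an edge of the same color has finitely many orbits on the vertex set. *)

theory Defs
  imports Main
begin

definition simple_graph :: "'v set \<Rightarrow> ('v \<Rightarrow> 'v \<Rightarrow> bool) \<Rightarrow> bool" where
  "simple_graph V E \<longleftrightarrow>
     (\<forall>u v. E u v \<longrightarrow> u \<in> V \<and> v \<in> V) \<and>
     (\<forall>u v. E u v \<longrightarrow> E v u) \<and>
     (\<forall>v. \<not> E v v)"

definition connected_graph :: "'v set \<Rightarrow> ('v \<Rightarrow> 'v \<Rightarrow> bool) \<Rightarrow> bool" where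
  "connected_graph V E \<longleftrightarrow> V \<noteq> {} \<and> (\<forall>u\<in>V. \<forall>v\<in>V. E\<^sup>*\<^sup>* u v)"

definition is_cycle :: "('v \<Rightarrow> 'v \<Rightarrow> bool) \<Rightarrow> 'v list \<Rightarrow> bool" where
  "is_cycle E xs \<longleftrightarrow> length xs \<ge> 3 \<and> distinct xs \<and>
     (\<forall>i. Suc i < length xs \<longrightarrow> E (xs ! i) (xs ! Suc i)) \<and>
     E (last xs) (hd xs)"

definition is_tree :: "'v set \<Rightarrow> ('v \<Rightarrow> 'v \<Rightarrow> bool) \<Rightarrow> bool" where
  "is_tree V E \<longleftrightarrow> simple_graph V E \<and> connected_graph V E \<and> (\<nexists>xs. is_cycle E xs)"

definition locally_finite :: "'v set \<Rightarrow> ('v \<Rightarrow> 'v \<Rightarrow> bool) \<Rightarrow> bool" where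
  "locally_finite V E \<longleftrightarrow> (\<forall>v\<in>V. finite {w. E v w})"

definition graph_automorphism :: "'v set \<Rightarrow> ('v \<Rightarrow> 'v \<Rightarrow> bool) \<Rightarrow> ('v \<Rightarrow> 'v) \<Rightarrow> bool" where
  "graph_automorphism V E f \<longleftrightarrow> bij_betw f V V \<and>
     (\<forall>u\<in>V. \<forall>v\<in>V. E (f u) (f v) \<longleftrightarrow> E u v)"

definition orbits :: "'v set \<Rightarrow> ('v \<Rightarrow> 'v) set \<Rightarrow> 'v set set" where
  "orbits V G = {{f v | f. f \<in> G} | v. v \<in> V}"

definition quasi_transitive :: "'v set \<Rightarrow> ('v \<Rightarrow> 'v \<Rightarrow> bool) \<Rightarrow> bool" where
  "quasi_transitive V E \<longleftrightarrow> finite (orbits V {f. graph_automorphism V E f})"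

definition proper_edge_coloring :: "('v \<Rightarrow> 'v \<Rightarrow> bool) \<Rightarrow> ('v set \<Rightarrow> 'c) \<Rightarrow> bool" where
  "proper_edge_coloring E c \<longleftrightarrow>
     (\<forall>u v w. E u v \<and> E u w \<and> v \<noteq> w \<longrightarrow> c {u, v} \<noteq> c {u, w})"

definition color_preserving_automorphisms ::
    "'v set \<Rightarrow> ('v \<Rightarrow> 'v \<Rightarrow> bool) \<Rightarrow> ('v set \<Rightarrow> 'c) \<Rightarrow> ('v \<Rightarrow> 'v) set" where
  "color_preserving_automorphisms V E c =
     {f. graph_automorphism V E f \<and> (\<forall>u v. E u v \<longrightarrow> c {f u, f v} = c {u, v})}"

definition periodic_coloring :: "'v set \<Rightarrow> ('v \<Rightarrow> 'v \<Rightarrow> bool) \<Rightarrow> ('v set \<Rightarrow> 'c) \<Rightarrow> bool" where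
  "periodic_coloring V E c \<longleftrightarrow> finite (orbits V (color_preserving_automorphisms V E c))"

end

theory Submission
  imports Defs "HOL-Library.Countable"
begin


lemma xor_div2: "xor (a::nat) b div 2 = xor (a div 2) (b div 2)"
  using drop_bit_xor[of 1 a b] by (simp add: drop_bit_eq_div)

lemma xor_invol: "xor (xor (a::nat) b) b = a"
  by (simp add: xor.assoc)

lemma aut_comp:
  assumes "graph_automorphism V E f" "graph_automorphism V E g"
  shows "graph_automorphism V E (f \<circ> g)"
proof -
  have "bij_betw (f \<circ> g) V V" using assms unfolding graph_automorphism_def
    using bij_betw_trans by blast
  moreover have "E ((f \<circ> g) u) ((f \<circ> g) v) = E u v" if "u \<in> V" "v \<in> V" for u v
  proof -
    have "g u \<in> V" "g v \<in> V" using assms that unfolding graph_automorphism_def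
      by (meson bij_betwE)+
    then show ?thesis using assms that unfolding graph_automorphism_def by simp
  qed
  ultimately show ?thesis unfolding graph_automorphism_def by blast
qed

lemma aut_inv:
  assumes "graph_automorphism V E f"
  shows "graph_automorphism V E (inv_into V f)"
proof -
  have b: "bij_betw f V V" using assms by (simp add: graph_automorphism_def)
  have bi: "bij_betw (inv_into V f) V V" using bij_betw_inv_into[OF b] .
  have "E (inv_into V f u) (inv_into V f v) = E u v" if "u \<in> V" "v \<in> V" for u v
  proof -
    have iu: "inv_into V f u \<in> V" "inv_into V f v \<in> V" using bi that by (auto dest: bij_betwE)
    have "f (inv_into V f u) = u" "f (inv_into V f v) = v"
      using that b by (auto simp: bij_betw_def f_inv_into_f)
    then show ?thesis using assms iu unfolding graph_automorphism_def by metis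
  qed
  then show ?thesis using bi by (simp add: graph_automorphism_def)
qed

lemma orb_eq:
  assumes comp: "\<forall>f\<in>G. \<forall>g\<in>G. f \<circ> g \<in> G" and inv: "\<forall>g\<in>G. inv_into V g \<in> G"
    and inj: "\<forall>g\<in>G. inj_on g V" and g: "g \<in> G" and x: "x \<in> V"
  shows "{f (g x) | f. f \<in> G} = {f x | f. f \<in> G}"
proof
  show "{f (g x) | f. f \<in> G} \<subseteq> {f x | f. f \<in> G}"
  proof
    fix y assume "y \<in> {f (g x) | f. f \<in> G}"
    then obtain f where f: "f \<in> G" "y = f (g x)" by blast
    have "y = (f \<circ> g) x" using f by simp
    moreover have "f \<circ> g \<in> G" using comp f g by blast
    ultimately show "y \<in> {f x | f. f \<in> G}" by blast
  qed
next
  show "{f x | f. f \<in> G} \<subseteq> {f (g x) | f. f \<in> G}"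
  proof
    fix y assume "y \<in> {f x | f. f \<in> G}"
    then obtain f where f: "f \<in> G" "y = f x" by blast
    have "inv_into V g (g x) = x" using inj g x by (simp add: inv_into_f_f)
    then have "y = (f \<circ> inv_into V g) (g x)" using f by simp
    moreover have "f \<circ> inv_into V g \<in> G" using comp inv f g by blast
    ultimately show "y \<in> {f (g x) | f. f \<in> G}" by blast
  qed
qed

lemma qt_reps:
  assumes fin: "finite R" and reps: "\<forall>v\<in>V. \<exists>g. graph_automorphism V E g \<and> g v \<in> R"
  shows "quasi_transitive V E"
proof -
  let ?G = "{f. graph_automorphism V E f}"
  let ?O = "\<lambda>v. {f v | f. f \<in> ?G}"
  have cl1: "\<forall>f\<in>?G. \<forall>g\<in>?G. f \<circ> g \<in> ?G" by (simp add: aut_comp)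
  have cl2: "\<forall>g\<in>?G. inv_into V g \<in> ?G" by (simp add: aut_inv)
  have cl3: "\<forall>g\<in>?G. inj_on g V" by (auto simp: graph_automorphism_def bij_betw_def)
  have "orbits V ?G \<subseteq> ?O ` R"
  proof
    fix A assume A: "A \<in> orbits V ?G"
    have "\<exists>v. A = ?O v \<and> v \<in> V" using A unfolding orbits_def by simp
    then obtain v where v: "v \<in> V" "A = ?O v" by blast
    obtain g where g: "graph_automorphism V E g" "g v \<in> R" using reps v(1) by blast
    have "?O (g v) = ?O v" using orb_eq[OF cl1 cl2 cl3, of g v] g(1) v(1) by simp
    then have "A = ?O (g v)" using v(2) by simp
    then show "A \<in> ?O ` R" using g(2) by (rule image_eqI)
  qed
  then show ?thesis unfolding quasi_transitive_def using fin by (rule finite_surj[rotated])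
qed

lemma rtranclp_rev:
  assumes "\<forall>x y. E x y \<longrightarrow> E y x" "E\<^sup>*\<^sup>* x y"
  shows "E\<^sup>*\<^sup>* y x"
  using assms(2) by (induction rule: rtranclp_induct)
    (auto intro: converse_rtranclp_into_rtranclp assms(1)[rule_format])

lemma no_cycle:
  fixes ht :: "'v \<Rightarrow> int"
  assumes edge: "\<forall>u v. E u v \<longrightarrow> v = pr u \<or> u = pr v" and up: "\<forall>u. ht u < ht (pr u)"
  shows "\<not> is_cycle E xs"
proof
  assume cyc: "is_cycle E xs"
  define L where "L = length xs"
  have L3: "L \<ge> 3" and dist: "distinct xs" using cyc by (auto simp: is_cycle_def L_def)
  have adj: "E (xs ! i) (xs ! ((i+1) mod L))" if "i < L" for i
  proof (cases "i + 1 < L")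
    case True then show ?thesis using cyc by (auto simp: is_cycle_def L_def)
  next
    case False
    then have "i = L - 1" using that by simp
    moreover have "xs \<noteq> []" using L3 L_def by auto
    then have "last xs = xs ! (L - 1)" "hd xs = xs ! 0"
      by (auto simp: L_def last_conv_nth hd_conv_nth)
    ultimately show ?thesis using cyc L3 by (auto simp: is_cycle_def)
  qed
  have ne: "xs \<noteq> []" using L3 L_def by auto
  define m where "m = Min (ht ` set xs)"
  have "m \<in> ht ` set xs" using ne by (simp add: m_def)
  then obtain j where j: "j < L" "ht (xs ! j) = m" by (auto simp: in_set_conv_nth L_def)
  have mn: "ht (xs ! j) \<le> ht (xs ! i)" if "i < L" for i
    using j that ne by (simp add: m_def L_def)
  define a where "a = (j + 1) mod L"
  define b where "b = (j + L - 1) mod L"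
  have aL: "a < L" "b < L" using L3 by (auto simp: a_def b_def)
  have e1: "E (xs ! j) (xs ! a)" using adj j by (simp add: a_def)
  have bj: "(b + 1) mod L = j"
  proof -
    have "(b + 1) mod L = (j + L - 1 + 1) mod L" by (simp add: b_def mod_Suc_eq)
    also have "j + L - 1 + 1 = j + L" using L3 by simp
    finally show ?thesis using j(1) by simp
  qed
  have e2: "E (xs ! b) (xs ! j)" using adj[OF aL(2)] bj by simp
  have "xs ! a = pr (xs ! j)"
  proof -
    have "xs ! a = pr (xs ! j) \<or> xs ! j = pr (xs ! a)" using edge e1 by blast
    moreover have "xs ! j \<noteq> pr (xs ! a)"
    proof
      assume "xs ! j = pr (xs ! a)"
      then have "ht (xs ! a) < ht (xs ! j)" using up[rule_format, of "xs ! a"] by simp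
      then show False using mn[OF aL(1)] by simp
    qed
    ultimately show ?thesis by blast
  qed
  moreover have "xs ! b = pr (xs ! j)"
  proof -
    have "xs ! j = pr (xs ! b) \<or> xs ! b = pr (xs ! j)" using edge e2 by blast
    moreover have "xs ! j \<noteq> pr (xs ! b)"
    proof
      assume "xs ! j = pr (xs ! b)"
      then have "ht (xs ! b) < ht (xs ! j)" using up[rule_format, of "xs ! b"] by simp
      then show False using mn[OF aL(2)] by simp
    qed
    ultimately show ?thesis by blast
  qed
  ultimately have "xs ! a = xs ! b" by simp
  then have "a = b" using dist aL by (simp add: L_def nth_eq_iff_index_eq)
  moreover have "a \<noteq> b"
  proof (cases "j = 0")
    case True
    then have "a = 1" using L3 by (simp add: a_def)
    moreover have "b = L - 1" unfolding b_def using True L3 by simp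
    ultimately show ?thesis using L3 by simp
  next
    case False
    have e: "j + L - 1 = (j - 1) + L" using False by simp
    have "b = ((j - 1) + L) mod L" unfolding b_def e ..
    also have "\<dots> = j - 1" using j(1) by simp
    finally have bb: "b = j - 1" .
    show ?thesis
    proof (cases "j + 1 < L")
      case True
      then have "a = j + 1" by (simp add: a_def)
      then show ?thesis using bb by simp
    next
      case F2: False
      then have "j + 1 = L" using j(1) by simp
      then have "a = 0" by (simp add: a_def)
      then show ?thesis using bb L3 \<open>j + 1 = L\<close> by simp
    qed
  qed
  ultimately show False by simp
qed



datatype vtx = MV int nat | LV int nat nat

instance vtx :: countable by countable_datatype

definition nl :: "int \<Rightarrow> nat" where "nl n = nat (n mod 3) + 1"

definition V0 :: "vtx set" where
  "V0 = {MV n k | n k. True} \<union> {LV n k i | n k i. i < nl n}"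

fun par :: "vtx \<Rightarrow> vtx" where
  "par (MV n k) = MV (n+1) (k div 2)"
| "par (LV n k i) = MV n k"

definition E0 :: "vtx \<Rightarrow> vtx \<Rightarrow> bool" where
  "E0 a b \<longleftrightarrow> a \<in> V0 \<and> b \<in> V0 \<and> (b = par a \<or> a = par b)"

fun ht :: "vtx \<Rightarrow> int" where
  "ht (MV n k) = 2*n+1"
| "ht (LV n k i) = 2*n"

lemma MV_in [simp]: "MV n k \<in> V0" by (simp add: V0_def)
lemma LV_in [simp]: "LV n k i \<in> V0 \<longleftrightarrow> i < nl n" by (simp add: V0_def)

lemma par_in: "par a \<in> V0" by (cases a) auto

lemma par_not_LV [simp]: "par x \<noteq> LV n k i" "LV n k i \<noteq> par x" by (cases x; simp)+

lemma par_neq: "par a \<noteq> a" by (cases a) auto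

lemma ht_par: "ht a < ht (par a)" by (cases a) auto

lemma nbr_MV: "{b. E0 (MV n k) b} =
  {MV (n+1) (k div 2), MV (n-1) (2*k), MV (n-1) (2*k+1)} \<union> (\<lambda>i. LV n k i) ` {..<nl n}"
proof (rule set_eqI)
  fix b show "b \<in> {b. E0 (MV n k) b} \<longleftrightarrow> b \<in> {MV (n+1) (k div 2), MV (n-1) (2*k), MV (n-1) (2*k+1)} \<union> (\<lambda>i. LV n k i) ` {..<nl n}"
  proof (cases b)
    case (MV m j)
    have "(n = m + 1 \<and> k = j div 2) \<longleftrightarrow> (m = n - 1 \<and> (j = 2*k \<or> j = 2*k+1))" by presburger
    then show ?thesis using MV by (auto simp: E0_def)
  next
    case (LV m j i)
    then show ?thesis by (auto simp: E0_def)
  qed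
qed

lemma nbr_LV: "LV n k i \<in> V0 \<Longrightarrow> {b. E0 (LV n k i) b} = {MV n k}"
  by (auto simp: E0_def elim: par.elims)

lemma deg_MV: "card {b. E0 (MV n k) b} = 3 + nl n"
proof -
  have "card {MV (n+1) (k div 2), MV (n-1) (2*k), MV (n-1) (2*k+1)} = 3" by simp
  moreover have "card ((\<lambda>i. LV n k i) ` {..<nl n}) = nl n"
    by (subst card_image) (auto simp: inj_on_def)
  ultimately show ?thesis unfolding nbr_MV
    by (subst card_Un_disjoint) auto
qed

lemma fin_nbr: "a \<in> V0 \<Longrightarrow> finite {b. E0 a b}"
  by (cases a) (auto simp: nbr_MV nbr_LV simp del: LV_in)

lemma E0_sym: "E0 a b \<Longrightarrow> E0 b a" by (auto simp: E0_def)

lemma aut_deg: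
  assumes g: "graph_automorphism V0 E0 g" and a: "a \<in> V0"
  shows "card {b. E0 (g a) b} = card {b. E0 a b}"
proof -
  have bij: "bij_betw g V0 V0" and adj: "\<forall>u\<in>V0. \<forall>v\<in>V0. E0 (g u) (g v) = E0 u v"
    using g by (auto simp: graph_automorphism_def)
  have sub: "{b. E0 a b} \<subseteq> V0" by (auto simp: E0_def)
  have "{b. E0 (g a) b} = g ` {b. E0 a b}"
  proof
    show "g ` {b. E0 a b} \<subseteq> {b. E0 (g a) b}" using adj a sub by auto
    show "{b. E0 (g a) b} \<subseteq> g ` {b. E0 a b}"
    proof
      fix w assume w: "w \<in> {b. E0 (g a) b}"
      then have "w \<in> V0" by (auto simp: E0_def)
      then obtain b where b: "b \<in> V0" "w = g b" using bij by (auto simp: bij_betw_def)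
      then have "E0 a b" using adj a w by auto
      then show "w \<in> g ` {b. E0 a b}" using b by auto
    qed
  qed
  moreover have "inj_on g {b. E0 a b}" using bij sub by (auto simp: bij_betw_def intro: inj_on_subset)
  ultimately show ?thesis by (simp add: card_image)
qed

lemma aut_MV:
  assumes g: "graph_automorphism V0 E0 g"
  shows "\<exists>n' k'. g (MV n k) = MV n' k' \<and> n' mod 3 = n mod 3"
proof -
  have gin: "g (MV n k) \<in> V0" using g by (auto simp: graph_automorphism_def dest: bij_betwE)
  have d: "card {b. E0 (g (MV n k)) b} = 3 + nl n" using aut_deg[OF g] deg_MV by simp
  show ?thesis
  proof (cases "g (MV n k)")
    case (MV n' k')
    then have "nl n' = nl n" using d deg_MV by simp
    then have "n' mod 3 = n mod 3" unfolding nl_def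
      by (metis add_right_cancel eq_nat_nat_iff pos_mod_sign zero_less_numeral)
    then show ?thesis using MV by blast
  next
    case (LV m j i)
    then have "card {b. E0 (g (MV n k)) b} = 1" using nbr_LV gin by simp
    then show ?thesis using d by simp
  qed
qed

lemma aut_par:
  assumes g: "graph_automorphism V0 E0 g"
  shows "g (par (MV n k)) = par (g (MV n k))"
proof -
  obtain n' k' where 1: "g (MV n k) = MV n' k'" "n' mod 3 = n mod 3" using aut_MV[OF g] by blast
  obtain m j where 2: "g (MV (n+1) (k div 2)) = MV m j" "m mod 3 = (n+1) mod 3" using aut_MV[OF g] by blast
  have "E0 (MV n k) (MV (n+1) (k div 2))" by (simp add: E0_def)
  then have "E0 (g (MV n k)) (g (MV (n+1) (k div 2)))" using g by (simp add: graph_automorphism_def)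
  then have "E0 (MV n' k') (MV m j)" using 1 2 by simp
  then have "(m = n' + 1 \<and> j = k' div 2) \<or> (n' = m + 1 \<and> k' = j div 2)" by (simp add: E0_def)
  moreover have "n' \<noteq> m + 1" using 1(2) 2(2) by presburger
  ultimately show ?thesis using 1 2 by auto
qed

lemma aut0_intro:
  assumes "\<forall>a. g (f a) = a" "\<forall>a. f (g a) = a" "\<forall>a\<in>V0. f a \<in> V0" "\<forall>a\<in>V0. g a \<in> V0"
    "\<forall>a. par (f a) = f (par a)"
  shows "graph_automorphism V0 E0 f"
proof -
  have "bij_betw f V0 V0" using assms by (intro bij_betw_byWitness[where f'=g]) auto
  moreover have "E0 (f u) (f v) = E0 u v" if "u \<in> V0" "v \<in> V0" for u v
  proof -
    have inj: "f x = f y \<longleftrightarrow> x = y" for x y using assms(1) by metis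
    show ?thesis using that assms(3,5) inj by (auto simp: E0_def)
  qed
  ultimately show ?thesis by (simp add: graph_automorphism_def)
qed

definition tt :: "int \<Rightarrow> nat \<Rightarrow> int \<Rightarrow> nat" where
  "tt n0 k0 m = (if m \<le> n0 then k0 * 2 ^ nat (n0 - m) else k0 div 2 ^ nat (m - n0))"

lemma tt_step: "tt n0 k0 (m + 1) = tt n0 k0 m div 2"
proof (cases "m + 1 \<le> n0")
  case True
  then have "nat (n0 - m) = Suc (nat (n0 - (m+1)))" by simp
  then show ?thesis using True by (simp add: tt_def)
next
  case False
  show ?thesis
  proof (cases "m = n0")
    case True then show ?thesis by (simp add: tt_def)
  next
    case F2: False
    then have "nat (m + 1 - n0) = Suc (nat (m - n0))" using False by simp
    then show ?thesis using False F2 by (simp add: tt_def div_mult2_eq power_Suc2 del: power_Suc)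
  qed
qed

fun phi :: "int \<Rightarrow> nat \<Rightarrow> vtx \<Rightarrow> vtx" where
  "phi n0 k0 (MV m j) = MV m (xor j (tt n0 k0 m))"
| "phi n0 k0 (LV m j i) = LV m (xor j (tt n0 k0 m)) i"

lemma phi_aut: "graph_automorphism V0 E0 (phi n0 k0)"
proof (rule aut0_intro[where g = "phi n0 k0"])
  show "\<forall>a. phi n0 k0 (phi n0 k0 a) = a"
  proof
    fix a show "phi n0 k0 (phi n0 k0 a) = a" by (cases a) (simp_all add: xor_invol)
  qed
  then show "\<forall>a. phi n0 k0 (phi n0 k0 a) = a" .
  show "\<forall>a\<in>V0. phi n0 k0 a \<in> V0"
  proof
    fix a assume "a \<in> V0" then show "phi n0 k0 a \<in> V0" by (cases a) simp_all
  qed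
  then show "\<forall>a\<in>V0. phi n0 k0 a \<in> V0" .
  show "\<forall>a. par (phi n0 k0 a) = phi n0 k0 (par a)"
  proof
    fix a show "par (phi n0 k0 a) = phi n0 k0 (par a)"
      by (cases a) (simp_all add: xor_div2 tt_step)
  qed
qed

fun sh :: "int \<Rightarrow> vtx \<Rightarrow> vtx" where
  "sh d (MV m j) = MV (m + 3*d) j"
| "sh d (LV m j i) = LV (m + 3*d) j i"

lemma nl_sh: "nl (m + 3*d) = nl m" by (simp add: nl_def)

lemma sh_aut: "graph_automorphism V0 E0 (sh d)"
proof (rule aut0_intro[where g = "sh (-d)"])
  show "\<forall>a. sh (-d) (sh d a) = a"
  proof fix a show "sh (-d) (sh d a) = a" by (cases a) simp_all qed
  show "\<forall>a. sh d (sh (-d) a) = a"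
  proof fix a show "sh d (sh (-d) a) = a" by (cases a) simp_all qed
  show "\<forall>a\<in>V0. sh d a \<in> V0"
  proof fix a assume "a \<in> V0" then show "sh d a \<in> V0" by (cases a) (simp_all add: nl_sh) qed
  show "\<forall>a\<in>V0. sh (-d) a \<in> V0"
  proof fix a assume "a \<in> V0" then show "sh (-d) a \<in> V0"
      using nl_sh[of _ "-d"] by (cases a) simp_all qed
  show "\<forall>a. par (sh d a) = sh d (par a)"
  proof fix a show "par (sh d a) = sh d (par a)" by (cases a) simp_all qed
qed

definition R0 :: "vtx set" where
  "R0 = (\<lambda>r. MV r 0) ` {0..2} \<union> (\<lambda>(r,i). LV r 0 i) ` ({0..2} \<times> {..<3})"

lemma finite_R0: "finite R0" by (simp add: R0_def)

lemma reps0: "a \<in> V0 \<Longrightarrow> \<exists>g. graph_automorphism V0 E0 g \<and> g a \<in> R0"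
proof (cases a)
  case (MV n k)
  let ?g = "sh (-(n div 3)) \<circ> phi n k"
  have "?g a = MV (n mod 3) 0" using MV by (simp add: tt_def) presburger
  moreover have "MV (n mod 3) 0 \<in> R0" unfolding R0_def by auto
  moreover have "graph_automorphism V0 E0 ?g" by (rule aut_comp[OF sh_aut phi_aut])
  ultimately show ?thesis by metis
next
  case (LV n k i)
  assume "a \<in> V0"
  then have i: "i < 3" using LV by (simp add: nl_def)
  let ?g = "sh (-(n div 3)) \<circ> phi n k"
  have "?g a = LV (n mod 3) 0 i" using LV by (simp add: tt_def) presburger
  moreover have "LV (n mod 3) 0 i \<in> R0" unfolding R0_def using i by force
  moreover have "graph_automorphism V0 E0 ?g" by (rule aut_comp[OF sh_aut phi_aut])
  ultimately show ?thesis by metis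
qed



lemma cp_comp:
  assumes sg: "simple_graph V E" and f: "f \<in> color_preserving_automorphisms V E c"
    and g: "g \<in> color_preserving_automorphisms V E c"
  shows "f \<circ> g \<in> color_preserving_automorphisms V E c"
proof -
  have fa: "graph_automorphism V E f" and ga: "graph_automorphism V E g"
    using f g by (auto simp: color_preserving_automorphisms_def)
  have "c {f (g u), f (g v)} = c {u, v}" if "E u v" for u v
  proof -
    have uv: "u \<in> V" "v \<in> V" using sg that by (auto simp: simple_graph_def)
    then have "E (g u) (g v)" using ga that by (simp add: graph_automorphism_def)
    then have "c {f (g u), f (g v)} = c {g u, g v}" using f by (simp add: color_preserving_automorphisms_def)
    also have "\<dots> = c {u, v}" using g that by (simp add: color_preserving_automorphisms_def)
    finally show ?thesis .
  qed
  then show ?thesis using aut_comp[OF fa ga] by (simp add: color_preserving_automorphisms_def)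
qed

lemma cp_inv:
  assumes sg: "simple_graph V E" and f: "f \<in> color_preserving_automorphisms V E c"
  shows "inv_into V f \<in> color_preserving_automorphisms V E c"
proof -
  have fa: "graph_automorphism V E f" using f by (auto simp: color_preserving_automorphisms_def)
  have b: "bij_betw f V V" using fa by (simp add: graph_automorphism_def)
  have ia: "graph_automorphism V E (inv_into V f)" by (rule aut_inv[OF fa])
  have "c {inv_into V f u, inv_into V f v} = c {u, v}" if "E u v" for u v
  proof -
    have uv: "u \<in> V" "v \<in> V" using sg that by (auto simp: simple_graph_def)
    have iu: "inv_into V f u \<in> V" "inv_into V f v \<in> V"
      using uv b by (auto intro: inv_into_into simp: bij_betw_def)
    have fi: "f (inv_into V f u) = u" "f (inv_into V f v) = v"
      using uv b by (auto simp: bij_betw_def f_inv_into_f)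
    have "E (inv_into V f u) (inv_into V f v)" using ia uv that by (simp add: graph_automorphism_def)
    then have "c {f (inv_into V f u), f (inv_into V f v)} = c {inv_into V f u, inv_into V f v}"
      using f by (simp add: color_preserving_automorphisms_def)
    then show ?thesis using fi by simp
  qed
  then show ?thesis using ia by (simp add: color_preserving_automorphisms_def)
qed

lemma cp_free:
  assumes sg: "simple_graph V E" and conn: "connected_graph V E" and pc: "proper_edge_coloring E c"
    and g: "g \<in> color_preserving_automorphisms V E c" and x: "x \<in> V" "g x = x" and y: "y \<in> V"
  shows "g y = y"
proof -
  have ga: "graph_automorphism V E g" using g by (simp add: color_preserving_automorphisms_def)
  have "E\<^sup>*\<^sup>* x y" using conn x y by (simp add: connected_graph_def)
  then show ?thesis
  proof (induction rule: rtranclp_induct)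
    case base then show ?case using x by simp
  next
    case (step u w)
    have uw: "u \<in> V" "w \<in> V" using sg step(2) by (auto simp: simple_graph_def)
    have "E (g u) (g w)" using ga uw step(2) by (simp add: graph_automorphism_def)
    then have e: "E u (g w)" using step(3) by simp
    have "c {g u, g w} = c {u, w}" using g step(2) by (simp add: color_preserving_automorphisms_def)
    then have "c {u, g w} = c {u, w}" using step(3) by simp
    then show ?case using pc e step(2) unfolding proper_edge_coloring_def by metis
  qed
qed

lemma no_periodic_abs:
  assumes sg: "simple_graph V E" and conn: "connected_graph V E" and pc: "proper_edge_coloring E c"
    and MV: "M \<subseteq> V" "M \<noteq> {}" and pM: "\<forall>x\<in>M. p x \<in> M"
    and ch: "\<forall>x\<in>M. \<exists>y1 y2. y1 \<in> M \<and> y2 \<in> M \<and> y1 \<noteq> y2 \<and> p y1 = x \<and> p y2 = x"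
    and autp: "\<forall>g. graph_automorphism V E g \<longrightarrow> (\<forall>x\<in>M. g x \<in> M \<and> g (p x) = p (g x))"
  shows "\<not> periodic_coloring V E c"
proof
  assume per: "periodic_coloring V E c"
  define G where "G = color_preserving_automorphisms V E c"
  define Ob where "Ob x = {f x | f. f \<in> G}" for x
  have cl1: "\<forall>f\<in>G. \<forall>g\<in>G. f \<circ> g \<in> G" unfolding G_def using cp_comp[OF sg] by blast
  have cl2: "\<forall>g\<in>G. inv_into V g \<in> G" unfolding G_def using cp_inv[OF sg] by blast
  have cl3: "\<forall>g\<in>G. inj_on g V"
    by (auto simp: G_def color_preserving_automorphisms_def graph_automorphism_def bij_betw_def)
  have Oeq: "Ob (g x) = Ob x" if "g \<in> G" "x \<in> V" for g x
    unfolding Ob_def by (rule orb_eq[OF cl1 cl2 cl3 that])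
  have idG: "id \<in> G"
    by (simp add: G_def color_preserving_automorphisms_def graph_automorphism_def)
  have selfO: "x \<in> Ob x" for x unfolding Ob_def using idG by (metis (mono_tags, lifting) CollectI id_apply)
  have autG: "graph_automorphism V E g" if "g \<in> G" for g
    using that by (simp add: G_def color_preserving_automorphisms_def)
  define S where "S = Ob ` M"
  have "S \<subseteq> orbits V G" unfolding S_def orbits_def Ob_def using MV(1) by blast
  then have finS: "finite S" using per finite_subset
    by (auto simp: periodic_coloring_def G_def)
  define Q where "Q A = Ob (p (SOME x. x \<in> M \<and> Ob x = A))" for A
  have Qx: "Q (Ob x) = Ob (p x)" if x: "x \<in> M" for x
  proof -
    define x' where "x' = (SOME x'. x' \<in> M \<and> Ob x' = Ob x)"
    have "x' \<in> M \<and> Ob x' = Ob x" unfolding x'_def by (rule someI[of _ x]) (simp add: x)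
    then have x'M: "x' \<in> M" and x'Ob: "Ob x' = Ob x" by auto
    have "x' \<in> Ob x" using selfO x'Ob by metis
    then obtain g where g: "g \<in> G" "x' = g x" unfolding Ob_def by blast
    have "p x' = g (p x)" using autp autG[OF g(1)] x g(2) by metis
    then have "Ob (p x') = Ob (p x)" using Oeq g(1) pM x MV(1) by auto
    then show ?thesis by (simp add: Q_def x'_def)
  qed
  have "S \<subseteq> Q ` S"
  proof
    fix A assume "A \<in> S"
    then obtain x where x: "x \<in> M" "A = Ob x" by (auto simp: S_def)
    then obtain y where y: "y \<in> M" "p y = x" using ch by blast
    have "Q (Ob y) = A" using Qx[OF y(1)] y x by simp
    moreover have "Ob y \<in> S" using y by (simp add: S_def)
    ultimately show "A \<in> Q ` S" by blast
  qed
  then have inj: "inj_on Q S" using finS by (rule finite_surj_inj[rotated])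
  obtain x where x: "x \<in> M" using MV(2) by blast
  then obtain y1 y2 where y: "y1 \<in> M" "y2 \<in> M" "y1 \<noteq> y2" "p y1 = x" "p y2 = x" using ch by blast
  have "Q (Ob y1) = Q (Ob y2)" using Qx y by simp
  moreover have "Ob y1 \<in> S" "Ob y2 \<in> S" using y by (auto simp: S_def)
  ultimately have "Ob y1 = Ob y2" using inj by (simp add: inj_on_def)
  then have "y2 \<in> Ob y1" using selfO by metis
  then obtain g where g: "g \<in> G" "y2 = g y1" unfolding Ob_def by blast
  have "g x = x" using autp autG[OF g(1)] y g(2) by metis
  then have "g y1 = y1" using cp_free[OF sg conn pc, of g x y1] g(1) x y MV(1) by (auto simp: G_def)
  then show False using g y by simp
qed



lemma up0: "E0\<^sup>*\<^sup>* (MV n k) (MV (n + int m) (k div 2^m))"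
proof (induction m)
  case 0 then show ?case by simp
next
  case (Suc m)
  have "E0 (MV (n + int m) (k div 2^m)) (MV (n + int (Suc m)) (k div 2^(Suc m)))"
    by (simp add: E0_def div_mult2_eq power_Suc2 del: power_Suc)
  then show ?case using Suc.IH rtranclp.rtrancl_into_rtrancl by metis
qed

lemma E0_symm: "\<forall>x y. E0 x y \<longrightarrow> E0 y x" using E0_sym by blast

lemma to_root: assumes "a \<in> V0" shows "E0\<^sup>*\<^sup>* a (MV 0 0)"
proof -
  have MVc: "E0\<^sup>*\<^sup>* (MV n k) (MV 0 0)" for n k
  proof -
    define m where "m = k + nat (- n)"
    have "k < 2 ^ k" by (rule less_exp)
    also have "(2::nat) ^ k \<le> 2 ^ m" unfolding m_def by (rule power_increasing) auto
    finally have kd: "k div 2 ^ m = 0" by simp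
    have N: "n + int m \<ge> 0" unfolding m_def by linarith
    have 1: "E0\<^sup>*\<^sup>* (MV n k) (MV (n + int m) 0)" using up0[of n k m] kd by simp
    have "E0\<^sup>*\<^sup>* (MV 0 0) (MV (0 + int (nat (n + int m))) (0 div 2 ^ nat (n + int m)))" by (rule up0)
    then have "E0\<^sup>*\<^sup>* (MV 0 0) (MV (n + int m) 0)" using N by simp
    then have "E0\<^sup>*\<^sup>* (MV (n + int m) 0) (MV 0 0)" by (rule rtranclp_rev[OF E0_symm])
    then show ?thesis using 1 by simp
  qed
  show ?thesis
  proof (cases a)
    case (MV n k) then show ?thesis using MVc by simp
  next
    case (LV n k i)
    then have "E0 a (MV n k)" using assms by (simp add: E0_def)
    then show ?thesis using MVc[of n k] by (rule converse_rtranclp_into_rtranclp)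
  qed
qed

definition VN :: "nat set" where "VN = to_nat ` V0"
definition EN :: "nat \<Rightarrow> nat \<Rightarrow> bool" where
  "EN u v \<longleftrightarrow> (\<exists>a b. u = to_nat a \<and> v = to_nat b \<and> E0 a b)"

lemma EN_h [simp]: "EN (to_nat a) (to_nat b) = E0 a b"
  unfolding EN_def using inj_eq[OF inj_to_nat] by metis

lemma EN_D: "EN u v \<Longrightarrow> \<exists>a b. u = to_nat a \<and> v = to_nat b \<and> E0 a b"
  by (simp add: EN_def)

lemma VN_D: "u \<in> VN \<Longrightarrow> \<exists>a. a \<in> V0 \<and> u = to_nat a" by (auto simp: VN_def)

lemma sgN: "simple_graph VN EN"
proof -
  have 1: "\<forall>u v. EN u v \<longrightarrow> u \<in> VN \<and> v \<in> VN"
  proof (intro allI impI)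
    fix u v assume "EN u v"
    then obtain a b where "u = to_nat a" "v = to_nat b" "E0 a b" using EN_D by blast
    then show "u \<in> VN \<and> v \<in> VN" by (auto simp: VN_def E0_def)
  qed
  have 2: "\<forall>u v. EN u v \<longrightarrow> EN v u"
  proof (intro allI impI)
    fix u v assume "EN u v"
    then obtain a b where "u = to_nat a" "v = to_nat b" "E0 a b" using EN_D by blast
    then show "EN v u" using E0_sym by simp
  qed
  have 3: "\<forall>v. \<not> EN v v"
  proof (intro allI notI)
    fix v assume "EN v v"
    then obtain a b where ab: "v = to_nat a" "v = to_nat b" "E0 a b" using EN_D by blast
    then have "a = b" by (metis from_nat_to_nat)
    then have "E0 a a" using ab(3) by simp
    then show False using par_neq[of a] by (auto simp: E0_def)
  qed
  show ?thesis using 1 2 3 by (simp add: simple_graph_def)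
qed

lemma rt_N: "E0\<^sup>*\<^sup>* a b \<Longrightarrow> EN\<^sup>*\<^sup>* (to_nat a) (to_nat b)"
  by (induction rule: rtranclp_induct) (auto intro: rtranclp.rtrancl_into_rtrancl)

lemma connN: "connected_graph VN EN"
  unfolding connected_graph_def
proof (intro conjI ballI)
  show "VN \<noteq> {}" unfolding VN_def using MV_in[of 0 0] by blast
next
  fix u v assume "u \<in> VN" "v \<in> VN"
  then obtain a b where ab: "a \<in> V0" "b \<in> V0" "u = to_nat a" "v = to_nat b" using VN_D by metis
  have 1: "EN\<^sup>*\<^sup>* u (to_nat (MV 0 0))" using rt_N[OF to_root[OF ab(1)]] ab by simp
  have "EN\<^sup>*\<^sup>* v (to_nat (MV 0 0))" using rt_N[OF to_root[OF ab(2)]] ab by simp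
  then have 2: "EN\<^sup>*\<^sup>* (to_nat (MV 0 0)) v"
    by (rule rtranclp_rev[rotated]) (use sgN in \<open>auto simp: simple_graph_def\<close>)
  show "EN\<^sup>*\<^sup>* u v" using 1 2 by simp
qed

lemma acycN: "\<nexists>xs. is_cycle EN xs"
proof -
  have edge: "\<forall>u v. EN u v \<longrightarrow> v = (to_nat \<circ> par \<circ> from_nat) u \<or> u = (to_nat \<circ> par \<circ> from_nat) v"
  proof (intro allI impI)
    fix u v assume "EN u v"
    then obtain a b where "u = to_nat a" "v = to_nat b" "E0 a b" using EN_D by blast
    then show "v = (to_nat \<circ> par \<circ> from_nat) u \<or> u = (to_nat \<circ> par \<circ> from_nat) v"
      by (auto simp: E0_def)
  qed
  have up: "\<forall>u. (ht \<circ> from_nat) u < (ht \<circ> from_nat) ((to_nat \<circ> par \<circ> from_nat) u)"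
    by (simp add: ht_par)
  show ?thesis using no_cycle[OF edge up] by blast
qed

lemma treeN: "is_tree VN EN"
  using sgN connN acycN by (simp add: is_tree_def)

lemma lfN: "locally_finite VN EN"
  unfolding locally_finite_def
proof
  fix u assume "u \<in> VN"
  then obtain a where a: "a \<in> V0" "u = to_nat a" using VN_D by blast
  have "{w. EN u w} \<subseteq> to_nat ` {b. E0 a b}"
  proof
    fix w assume "w \<in> {w. EN u w}"
    then obtain a' b where "u = to_nat a'" "w = to_nat b" "E0 a' b" using EN_D by blast
    then show "w \<in> to_nat ` {b. E0 a b}" using a by (metis from_nat_to_nat image_eqI mem_Collect_eq)
  qed
  then show "finite {w. EN u w}" using fin_nbr[OF a(1)] finite_surj by blast
qed

lemma b1N: "bij_betw from_nat VN V0"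
proof (rule bij_betw_byWitness[where f'=to_nat])
  show "\<forall>a\<in>VN. to_nat (from_nat a :: vtx) = a" unfolding VN_def by auto
  show "\<forall>a'\<in>V0. from_nat (to_nat (a'::vtx)) = a'" by simp
  show "(from_nat :: nat \<Rightarrow> vtx) ` VN \<subseteq> V0" unfolding VN_def by auto
  show "to_nat ` V0 \<subseteq> VN" unfolding VN_def by simp
qed

lemma b2N: "bij_betw to_nat V0 VN"
proof (rule bij_betw_byWitness[where f'=from_nat])
  show "\<forall>a\<in>VN. to_nat (from_nat a :: vtx) = a" unfolding VN_def by auto
  show "\<forall>a'\<in>V0. from_nat (to_nat (a'::vtx)) = a'" by simp
  show "(from_nat :: nat \<Rightarrow> vtx) ` VN \<subseteq> V0" unfolding VN_def by auto
  show "to_nat ` V0 \<subseteq> VN" unfolding VN_def by simp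
qed

lemma autN:
  assumes f: "graph_automorphism V0 E0 f"
  shows "graph_automorphism VN EN (to_nat \<circ> f \<circ> from_nat)"
proof -
  have bf: "bij_betw f V0 V0" and af: "\<forall>u\<in>V0. \<forall>v\<in>V0. E0 (f u) (f v) = E0 u v"
    using f by (auto simp: graph_automorphism_def)
  have "bij_betw (to_nat \<circ> (f \<circ> from_nat)) VN VN"
    by (rule bij_betw_trans[OF bij_betw_trans[OF b1N bf] b2N])
  then have "bij_betw (to_nat \<circ> f \<circ> from_nat) VN VN" by (simp only: comp_assoc)
  moreover have "EN ((to_nat \<circ> f \<circ> from_nat) u) ((to_nat \<circ> f \<circ> from_nat) v) = EN u v"
    if uv: "u \<in> VN" "v \<in> VN" for u v
  proof -
    obtain a where a: "a \<in> V0" "u = to_nat a" using VN_D[OF uv(1)] by blast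
    obtain b where b: "b \<in> V0" "v = to_nat b" using VN_D[OF uv(2)] by blast
    have "E0 (f a) (f b) = E0 a b" using af a(1) b(1) by blast
    then show ?thesis using a(2) b(2) by simp
  qed
  ultimately show ?thesis unfolding graph_automorphism_def by blast
qed

lemma aut0N:
  assumes g: "graph_automorphism VN EN g"
  shows "graph_automorphism V0 E0 (from_nat \<circ> g \<circ> to_nat)"
proof -
  have bg: "bij_betw g VN VN" and ag: "\<forall>u\<in>VN. \<forall>v\<in>VN. EN (g u) (g v) = EN u v"
    using g by (auto simp: graph_automorphism_def)
  have "bij_betw (from_nat \<circ> (g \<circ> to_nat)) V0 V0"
    by (rule bij_betw_trans[OF bij_betw_trans[OF b2N bg] b1N])
  then have "bij_betw (from_nat \<circ> g \<circ> to_nat) V0 V0" by (simp only: comp_assoc)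
  moreover have "E0 ((from_nat \<circ> g \<circ> to_nat) a) ((from_nat \<circ> g \<circ> to_nat) b) = E0 a b"
    if "a \<in> V0" "b \<in> V0" for a b
  proof -
    have ia: "to_nat a \<in> VN" "to_nat b \<in> VN" using that unfolding VN_def by simp_all
    then have "g (to_nat a) \<in> VN" "g (to_nat b) \<in> VN" using bg by (auto dest: bij_betwE)
    then obtain a' b' :: vtx where a': "g (to_nat a) = to_nat a'" and b': "g (to_nat b) = to_nat b'"
      using VN_D by blast
    have "EN (g (to_nat a)) (g (to_nat b)) = EN (to_nat a) (to_nat b)"
      using ag ia by blast
    then show ?thesis using a' b' by simp
  qed
  ultimately show ?thesis unfolding graph_automorphism_def by blast
qed

lemma qtN: "quasi_transitive VN EN"
proof (rule qt_reps[where R = "to_nat ` R0"])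
  show "finite (to_nat ` R0)" using finite_R0 by simp
  show "\<forall>v\<in>VN. \<exists>g. graph_automorphism VN EN g \<and> g v \<in> to_nat ` R0"
  proof
    fix v assume "v \<in> VN"
    then obtain a where a: "a \<in> V0" "v = to_nat a" using VN_D by blast
    obtain g' where g': "graph_automorphism V0 E0 g'" "g' a \<in> R0" using reps0[OF a(1)] by blast
    have "(to_nat \<circ> g' \<circ> from_nat) v \<in> to_nat ` R0" using a g' by simp
    then show "\<exists>g. graph_automorphism VN EN g \<and> g v \<in> to_nat ` R0" using autN[OF g'(1)] by blast
  qed
qed

lemma nonperN:
  fixes c :: "nat set \<Rightarrow> nat"
  assumes pc: "proper_edge_coloring EN c"
  shows "\<not> periodic_coloring VN EN c"
proof (rule no_periodic_abs[OF sgN connN pc, where M = "{to_nat (MV n k) | n k. True}"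
      and p = "to_nat \<circ> par \<circ> from_nat"])
  show "{to_nat (MV n k) | n k. True} \<subseteq> VN" by (auto simp: VN_def)
  show "{to_nat (MV n k) | n k. True} \<noteq> {}" by blast
  show "\<forall>x\<in>{to_nat (MV n k) | n k. True}. (to_nat \<circ> par \<circ> from_nat) x \<in> {to_nat (MV n k) | n k. True}"
    by auto
  show "\<forall>x\<in>{to_nat (MV n k) | n k. True}. \<exists>y1 y2. y1 \<in> {to_nat (MV n k) | n k. True} \<and>
      y2 \<in> {to_nat (MV n k) | n k. True} \<and> y1 \<noteq> y2 \<and>
      (to_nat \<circ> par \<circ> from_nat) y1 = x \<and> (to_nat \<circ> par \<circ> from_nat) y2 = x"
  proof
    fix x assume "x \<in> {to_nat (MV n k) | n k. True}"
    then obtain n k where x: "x = to_nat (MV n k)" by blast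
    let ?y1 = "to_nat (MV (n - 1) (2*k))" and ?y2 = "to_nat (MV (n - 1) (2*k+1))"
    have "?y1 \<noteq> ?y2" using inj_eq[OF inj_to_nat] by (metis vtx.inject(1) n_not_Suc_n Suc_eq_plus1)
    moreover have "(to_nat \<circ> par \<circ> from_nat) ?y1 = x" "(to_nat \<circ> par \<circ> from_nat) ?y2 = x"
      using x by simp_all
    ultimately show "\<exists>y1 y2. y1 \<in> {to_nat (MV n k) | n k. True} \<and>
      y2 \<in> {to_nat (MV n k) | n k. True} \<and> y1 \<noteq> y2 \<and>
      (to_nat \<circ> par \<circ> from_nat) y1 = x \<and> (to_nat \<circ> par \<circ> from_nat) y2 = x" by blast
  qed
  show "\<forall>g. graph_automorphism VN EN g \<longrightarrow> (\<forall>x\<in>{to_nat (MV n k) | n k. True}.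
      g x \<in> {to_nat (MV n k) | n k. True} \<and> g ((to_nat \<circ> par \<circ> from_nat) x) = (to_nat \<circ> par \<circ> from_nat) (g x))"
  proof (intro allI impI ballI)
    fix g x assume g: "graph_automorphism VN EN g" and "x \<in> {to_nat (MV n k) | n k. True}"
    then obtain n k where x: "x = to_nat (MV n k)" by blast
    define g' :: "vtx \<Rightarrow> vtx" where "g' = from_nat \<circ> g \<circ> to_nat"
    have g'a: "graph_automorphism V0 E0 g'" unfolding g'_def by (rule aut0N[OF g])
    have gV: "g (to_nat a) = to_nat (g' a)" if "a \<in> V0" for a
    proof -
      have "g (to_nat a) \<in> VN" using g that by (auto simp: VN_def graph_automorphism_def dest: bij_betwE)
      then obtain b :: vtx where "g (to_nat a) = to_nat b" using VN_D by blast
      then show ?thesis by (simp add: g'_def)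
    qed
    obtain n' k' where nk: "g' (MV n k) = MV n' k'" using aut_MV[OF g'a] by blast
    have "g x = to_nat (MV n' k')" using gV[of "MV n k"] nk x by simp
    then have A: "g x \<in> {to_nat (MV n k) | n k. True}" by blast
    have "g ((to_nat \<circ> par \<circ> from_nat) x) = to_nat (g' (par (MV n k)))"
      using x gV[OF par_in[of "MV n k"]] by simp
    also have "\<dots> = to_nat (par (g' (MV n k)))" using aut_par[OF g'a] by simp
    also have "\<dots> = (to_nat \<circ> par \<circ> from_nat) (g x)" using gV[of "MV n k"] x by simp
    finally show "g x \<in> {to_nat (MV n k) | n k. True} \<and> g ((to_nat \<circ> par \<circ> from_nat) x) = (to_nat \<circ> par \<circ> from_nat) (g x)" using A by blast
  qed
qed

theorem mainTheorem18:
  shows "\<exists>(V :: nat set) (E :: nat \<Rightarrow> nat \<Rightarrow> bool).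
           is_tree V E \<and> locally_finite V E \<and> quasi_transitive V E \<and>
           (\<forall>c :: nat set \<Rightarrow> nat. proper_edge_coloring E c \<longrightarrow> \<not> periodic_coloring V E c)"
  using treeN lfN qtN nonperN by blast

end
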